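(* Let $\mathbb{S}$ be the Sorgenfrey line. The symmetric product $\mathcal{F}_2(\mathbb{S})$ is homeomorphic to $\mathbb{S}^2$. In particular, $\mathcal{F}_2(\mathbb{S})$ is homogeneous.
   Context: The Sorgenfrey line $\mathbb{S}$ is the real line with the topology generated by half-open intervals $[a,b[$. For a space $X$, $\mathcal{F}_2(X)$ denotes the set of all nonempty subsets of $X$ of cardinality at most $2$, with the subspace topology inherited from the hyperspace of closed subsets of $X$ with the Vietoris topology. A space $Y$ is homogeneous if for all $x,y\in Y$ there is a homeomorphism $h:Y\to Y$ with $h(x)=y$. *)

theory Defs
  imports "HOL-Analysis.Analysis"
begin

definition sorgenfrey :: "real topology" where
  "sorgenfrey = topology_generated_by {{a..<b} | a b. a < b}"

definition vietoris :: "'a topology \<Rightarrow> 'a set topology" where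
  "vietoris X = topology_generated_by
     ({{A. closedin X A \<and> A \<subseteq> U} | U. openin X U} \<union>
      {{A. closedin X A \<and> A \<inter> U \<noteq> {}} | U. openin X U})"

definition F2 :: "'a topology \<Rightarrow> 'a set topology" where
  "F2 X = subtopology (vietoris X)
     {A. A \<subseteq> topspace X \<and> A \<noteq> {} \<and> finite A \<and> card A \<le> 2}"

definition homogeneous_space :: "'a topology \<Rightarrow> bool" where
  "homogeneous_space Y \<longleftrightarrow>
     (\<forall>x\<in>topspace Y. \<forall>y\<in>topspace Y. \<exists>h. homeomorphic_map Y Y h \<and> h x = y)"

end

theory Submission
  imports Defs
begin


lemma open_sorg: "openin sorgenfrey U \<longleftrightarrow> (\<forall>x\<in>U. \<exists>e>0. {x..<x+e} \<subseteq> U)"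
proof
  assume "openin sorgenfrey U"
  then have "generate_topology_on {{a..<b} | a b. a < b} U"
    unfolding sorgenfrey_def by (simp add: openin_topology_generated_by_iff)
  then show "\<forall>x\<in>U. \<exists>e>0. {x..<x+e} \<subseteq> U"
  proof induct
    case Empty then show ?case by simp
  next
    case (Int a b)
    show ?case
    proof
      fix x assume "x \<in> a \<inter> b"
      then obtain e1 e2 where "e1 > 0" "{x..<x+e1} \<subseteq> a" "e2>0" "{x..<x+e2} \<subseteq> b"
        using Int by blast
      then show "\<exists>e>0. {x..<x + e} \<subseteq> a \<inter> b"
        by (intro exI[of _ "min e1 e2"]) (auto simp: subset_eq)
    qed
  next
    case (UN K) then show ?case by blast
  next
    case (Basis s)
    then obtain a b where s: "s = {a..<b}" "a < b" by blast
    show ?case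
    proof
      fix x assume "x \<in> s"
      then show "\<exists>e>0. {x..<x + e} \<subseteq> s" using s by (intro exI[of _ "b - x"]) auto
    qed
  qed
next
  assume H: "\<forall>x\<in>U. \<exists>e>0. {x..<x+e} \<subseteq> U"
  then obtain e where e: "\<And>x. x \<in> U \<Longrightarrow> e x > 0 \<and> {x..<x+e x} \<subseteq> U" by metis
  have U: "U = \<Union>((\<lambda>x. {x..<x+e x}) ` U)" using e by force
  have "generate_topology_on {{a..<b} | a b. a < b} (\<Union>((\<lambda>x. {x..<x+e x}) ` U))"
    apply (rule generate_topology_on.UN)
    apply (rule generate_topology_on.Basis)
    using e by force
  then show "openin sorgenfrey U" unfolding sorgenfrey_def
    by (subst U) (simp add: openin_topology_generated_by_iff)
qed

lemma topspace_sorg [simp]: "topspace sorgenfrey = UNIV"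
proof -
  have "\<forall>x\<in>UNIV. \<exists>e>0. {x..<x+e} \<subseteq> (UNIV::real set)"
    by (intro ballI exI[of _ 1]) auto
  then have "openin sorgenfrey UNIV" unfolding open_sorg .
  then show ?thesis using openin_subset by blast
qed

lemma open_sorg_Ico: "openin sorgenfrey {a..<b}"
  unfolding open_sorg
proof
  fix x assume x: "x \<in> {a..<b}"
  show "\<exists>e>0. {x..<x + e} \<subseteq> {a..<b}"
    by (intro exI[of _ "b - x"]) (use x in auto)
qed

definition sbox :: "real \<times> real \<Rightarrow> real \<Rightarrow> (real \<times> real) set" where
  "sbox p e = {fst p..<fst p+e} \<times> {snd p..<snd p+e}"

abbreviation S2 where "S2 \<equiv> prod_topology sorgenfrey sorgenfrey"

lemma openin_S2: "openin S2 W \<longleftrightarrow> (\<forall>p\<in>W. \<exists>e>0. sbox p e \<subseteq> W)"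
proof
  assume "openin S2 W"
  then have H: "\<And>x y. (x,y) \<in> W \<Longrightarrow> \<exists>U V. openin sorgenfrey U \<and> openin sorgenfrey V \<and> x \<in> U \<and> y \<in> V \<and> U \<times> V \<subseteq> W"
    by (simp add: openin_prod_topology_alt)
  show "\<forall>p\<in>W. \<exists>e>0. sbox p e \<subseteq> W"
  proof
    fix p assume pW: "p \<in> W"
    obtain x y where p: "p = (x,y)" by fastforce
    obtain U V where UV: "openin sorgenfrey U" "openin sorgenfrey V" "x \<in> U" "y \<in> V" "U \<times> V \<subseteq> W"
      using H[of x y] pW unfolding p by auto
    have "\<forall>x\<in>U. \<exists>e>0. {x..<x+e} \<subseteq> U" using UV(1) open_sorg by simp
    then obtain e1 where e1: "e1 > 0" "{x..<x+e1} \<subseteq> U" using UV(3) by auto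
    have "\<forall>x\<in>V. \<exists>e>0. {x..<x+e} \<subseteq> V" using UV(2) open_sorg by simp
    then obtain e2 where e2: "e2 > 0" "{y..<y+e2} \<subseteq> V" using UV(4) by auto
    have s1: "{x..<x+min e1 e2} \<subseteq> U" using e1(2) by (rule subset_trans[rotated]) auto
    have s2: "{y..<y+min e1 e2} \<subseteq> V" using e2(2) by (rule subset_trans[rotated]) auto
    have "sbox p (min e1 e2) = {x..<x+min e1 e2} \<times> {y..<y+min e1 e2}" unfolding p sbox_def by simp
    also have "\<dots> \<subseteq> U \<times> V" using s1 s2 by blast
    finally have "sbox p (min e1 e2) \<subseteq> W" using UV(5) by (rule subset_trans)
    moreover have "min e1 e2 > 0" using e1(1) e2(1) by simp
    ultimately show "\<exists>e>0. sbox p e \<subseteq> W" by blast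
  qed
next
  assume H: "\<forall>p\<in>W. \<exists>e>0. sbox p e \<subseteq> W"
  show "openin S2 W" unfolding openin_prod_topology_alt
  proof (intro allI impI)
    fix x y assume "(x,y) \<in> W"
    then obtain e where e: "e > 0" "sbox (x,y) e \<subseteq> W" using H by blast
    have "openin sorgenfrey {x..<x+e}" "openin sorgenfrey {y..<y+e}" by (rule open_sorg_Ico)+
    moreover have "x \<in> {x..<x+e}" "y \<in> {y..<y+e}" using e(1) by simp_all
    moreover have "{x..<x+e} \<times> {y..<y+e} \<subseteq> W" using e(2) unfolding sbox_def by simp
    ultimately show "\<exists>U V. openin sorgenfrey U \<and> openin sorgenfrey V \<and> x \<in> U \<and> y \<in> V \<and> U \<times> V \<subseteq> W"
      by blast
  qed
qed

lemma topspace_S2 [simp]: "topspace S2 = UNIV" by simp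

lemma open_box: "openin S2 (sbox p e)"
  unfolding openin_S2
proof
  fix q assume q: "q \<in> sbox p e"
  then have q1: "fst p \<le> fst q" "fst q < fst p + e" "snd p \<le> snd q" "snd q < snd p + e"
    unfolding sbox_def by (auto simp: mem_Times_iff)
  define d where "d = min (fst p + e - fst q) (snd p + e - snd q)"
  have "d > 0" using q1 unfolding d_def by simp
  moreover have "sbox q d \<subseteq> sbox p e"
  proof
    fix r assume "r \<in> sbox q d"
    then have "fst q \<le> fst r" "fst r < fst q + d" "snd q \<le> snd r" "snd r < snd q + d"
      unfolding sbox_def by (auto simp: mem_Times_iff)
    then show "r \<in> sbox p e" using q1 unfolding sbox_def d_def by (auto simp: mem_Times_iff)
  qed
  ultimately show "\<exists>d>0. sbox q d \<subseteq> sbox p e" by blast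
qed

lemma cont_pointwise:
  assumes "f \<in> topspace X \<rightarrow> topspace Y"
    and "\<And>x V. x \<in> topspace X \<Longrightarrow> openin Y V \<Longrightarrow> f x \<in> V \<Longrightarrow> \<exists>U. openin X U \<and> x \<in> U \<and> f ` U \<subseteq> V"
  shows "continuous_map X Y f"
  unfolding continuous_map_openin_preimage_eq
proof (intro conjI allI impI)
  show "f \<in> topspace X \<rightarrow> topspace Y" by fact
  fix V assume V: "openin Y V"
  show "openin X (topspace X \<inter> f -` V)"
  proof (subst openin_subopen, intro ballI)
    fix x assume "x \<in> topspace X \<inter> f -` V"
    then obtain U where U: "openin X U" "x \<in> U" "f ` U \<subseteq> V" using assms(2) V by blast
    have "U \<subseteq> topspace X" using openin_subset[OF U(1)] .
    moreover have "U \<subseteq> f -` V" using U(3) by blast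
    ultimately show "\<exists>T. openin X T \<and> x \<in> T \<and> T \<subseteq> topspace X \<inter> f -` V"
      using U(1,2) by blast
  qed
qed

lemma cont_into_sub:
  assumes "f \<in> topspace X \<rightarrow> B"
    and "\<And>x (e::real). x \<in> topspace X \<Longrightarrow> e > 0 \<Longrightarrow> \<exists>U. openin X U \<and> x \<in> U \<and> (\<forall>y\<in>U. f y \<in> sbox (f x) e)"
  shows "continuous_map X (subtopology S2 B) f"
proof (rule cont_pointwise)
  show "f \<in> topspace X \<rightarrow> topspace (subtopology S2 B)" using assms(1) by auto
  fix x V assume x: "x \<in> topspace X" and V: "openin (subtopology S2 B) V" "f x \<in> V"
  obtain W where W: "openin S2 W" "V = W \<inter> B" using V(1) unfolding openin_subtopology by blast
  have "\<forall>p\<in>W. \<exists>e>0. sbox p e \<subseteq> W" using W(1) openin_S2 by simp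
  then obtain e where "e > 0" "sbox (f x) e \<subseteq> W" using V(2) W(2) by auto
  obtain U where U: "openin X U" "x \<in> U" "\<forall>y\<in>U. f y \<in> sbox (f x) e" using assms(2)[OF x \<open>e > 0\<close>] by blast
  have UX: "U \<subseteq> topspace X" using openin_subset[OF U(1)] .
  have "f ` U \<subseteq> V"
  proof
    fix z assume "z \<in> f ` U"
    then obtain y where y: "y \<in> U" "z = f y" by blast
    have "f y \<in> W" using U(3) y(1) \<open>sbox (f x) e \<subseteq> W\<close> by blast
    moreover have "f y \<in> B" using assms(1) UX y(1) by (auto simp: Pi_iff)
    ultimately show "z \<in> V" using W(2) y(2) by simp
  qed
  then show "\<exists>U. openin X U \<and> x \<in> U \<and> f ` U \<subseteq> V"
    using U(1,2) by blast
qed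

lemma cont_sub:
  assumes "f ` A \<subseteq> B"
    and "\<And>p (e::real). p \<in> A \<Longrightarrow> e > 0 \<Longrightarrow> \<exists>d>0. \<forall>q\<in>A. q \<in> sbox p d \<longrightarrow> f q \<in> sbox (f p) e"
  shows "continuous_map (subtopology S2 A) (subtopology S2 B) f"
proof (rule cont_into_sub)
  show "f \<in> topspace (subtopology S2 A) \<rightarrow> B" using assms(1) by auto
  fix x and e::real assume x: "x \<in> topspace (subtopology S2 A)" and "e > 0"
  then obtain d where d: "d > 0" "\<forall>q\<in>A. q \<in> sbox x d \<longrightarrow> f q \<in> sbox (f x) e" using assms(2)[of x e] by auto
  have "x \<in> sbox x d" using d unfolding sbox_def by (cases x) auto
  then show "\<exists>U. openin (subtopology S2 A) U \<and> x \<in> U \<and> (\<forall>y\<in>U. f y \<in> sbox (f x) e)"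
  proof (intro exI[of _ "sbox x d \<inter> A"] conjI)
    show "openin (subtopology S2 A) (sbox x d \<inter> A)"
      unfolding openin_subtopology by (intro exI[of _ "sbox x d"]) (simp add: open_box)
  qed (use d x \<open>x \<in> sbox x d\<close> in auto)
qed



definition hasm :: "nat \<Rightarrow> real \<Rightarrow> real \<Rightarrow> bool" where
  "hasm j a b \<longleftrightarrow> (\<exists>k::int. a < k / 2^j \<and> k / 2^j \<le> b)"

definition lev :: "real \<Rightarrow> real \<Rightarrow> nat" where
  "lev a b = (LEAST j. hasm j a b)"

definition sc :: "real \<Rightarrow> real \<Rightarrow> real" where
  "sc a b = 1 / 2^(lev a b)"

definition cc :: "real \<Rightarrow> real \<Rightarrow> real" where
  "cc a b = \<lfloor>2^(lev a b) * b\<rfloor> / 2^(lev a b)"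

lemma hasm_ex:
  assumes "a < b" shows "\<exists>j. hasm j a b"
proof -
  obtain j where j: "1 / (b - a) < 2^j" using real_arch_pow[of 2 "1/(b-a)"] by auto
  have "1 < 2^j * (b - a)" using j assms by (simp add: field_simps)
  define k where "k = \<lfloor>2^j * b\<rfloor>"
  have "real_of_int k \<le> 2^j * b" "2^j * b < k + 1" unfolding k_def by linarith+
  then have "2^j * a < k" using \<open>1 < 2^j * (b - a)\<close> by (simp add: algebra_simps)
  then have "a < k / 2^j" "k / 2^j \<le> b" using \<open>real_of_int k \<le> 2^j * b\<close>
    by (simp_all add: field_simps)
  then show ?thesis unfolding hasm_def by blast
qed

lemma hasm_mono:
  assumes "hasm j a b" "j \<le> j'" shows "hasm j' a b"
proof -
  obtain k::int where k: "a < k / 2^j" "k / 2^j \<le> b" using assms unfolding hasm_def by blast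
  have eq: "real_of_int (k * 2^(j'-j)) / 2^j' = k / 2^j"
  proof -
    have "(2::real)^j' = 2^j * 2^(j'-j)" using assms(2) by (simp add: power_add[symmetric])
    then show ?thesis by simp
  qed
  show ?thesis unfolding hasm_def using k eq by (intro exI[of _ "k * 2^(j'-j)"]) simp
qed

lemma hasm_lev: assumes "a < b" shows "hasm (lev a b) a b"
  unfolding lev_def by (rule LeastI_ex[OF hasm_ex[OF assms]])

lemma not_hasm_lt: "j < lev a b \<Longrightarrow> \<not> hasm j a b"
  unfolding lev_def by (rule not_less_Least)

lemma sc_pos: "sc a b > 0" unfolding sc_def by simp

lemma cc_props:
  assumes "a < b" shows "a < cc a b" "cc a b \<le> b" "b < cc a b + sc a b"
proof -
  let ?L = "lev a b"
  let ?N = "(2::real)^?L"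
  obtain k::int where k: "a < k / ?N" "k / ?N \<le> b" using hasm_lev[OF assms] unfolding hasm_def by blast
  have "k \<le> ?N * b" using k by (simp add: field_simps)
  then have "k \<le> \<lfloor>?N * b\<rfloor>" by linarith
  then have "k / ?N \<le> \<lfloor>?N * b\<rfloor> / ?N" by (simp add: divide_right_mono)
  then show "a < cc a b" using k unfolding cc_def by linarith
  have Npos: "?N > 0" by simp
  have "\<lfloor>?N * b\<rfloor> \<le> ?N * b" by linarith
  then have "\<lfloor>?N * b\<rfloor> / ?N \<le> b" by (subst pos_divide_le_eq[OF Npos]) (simp add: mult.commute)
  then show "cc a b \<le> b" unfolding cc_def .
  have "?N * b < \<lfloor>?N * b\<rfloor> + 1" by linarith
  then have "b < (\<lfloor>?N * b\<rfloor> + 1) / ?N" by (subst pos_less_divide_eq[OF Npos]) (simp add: mult.commute)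
  then show "b < cc a b + sc a b" unfolding cc_def sc_def by (simp add: add_divide_distrib)
qed

lemma local_const:
  assumes ab: "a < b" and a': "a \<le> a'" "a' < cc a b" and b': "cc a b \<le> b'" "b' < cc a b + sc a b"
  shows "lev a' b' = lev a b" "cc a' b' = cc a b"
proof -
  let ?L = "lev a b"
  let ?N = "(2::real)^?L"
  define m where "m = \<lfloor>?N * b\<rfloor>"
  have c: "cc a b = m / ?N" unfolding cc_def m_def by simp
  have s: "sc a b = 1 / ?N" unfolding sc_def by simp
  have b'N: "m \<le> ?N * b'" "?N * b' < m + 1" using b' unfolding c s by (simp_all add: field_simps)
  have hL: "hasm ?L a' b'" unfolding hasm_def using a' b' c by (intro exI[of _ m]) simp
  have nh: "\<not> hasm j a' b'" if j: "j < ?L" for j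
  proof
    assume "hasm j a' b'"
    then obtain k::int where k: "a' < k / 2^j" "k / 2^j \<le> b'" unfolding hasm_def by blast
    define n where "n = k * 2^(?L - j)"
    have NN: "?N = 2^j * 2^(?L-j)" using j by (simp add: power_add[symmetric])
    have eq: "real_of_int n / ?N = k / 2^j" unfolding n_def NN by simp
    show False
    proof (cases "real_of_int n / ?N \<le> b")
      case True
      then have "hasm j a b" unfolding hasm_def using eq k a' by (intro exI[of _ k]) auto
      then show False using not_hasm_lt[OF j] by simp
    next
      case False
      then have "?N * b < n" by (simp add: field_simps)
      moreover have "real_of_int n / ?N \<le> b'" using k eq by simp
      then have "n \<le> ?N * b'" by (simp add: pos_divide_le_eq mult.commute)
      ultimately have "m < n" "n < m + 1" using b'N m_def by linarith+
      then show False by linarith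
    qed
  qed
  show L: "lev a' b' = lev a b" unfolding lev_def
  proof (rule Least_equality)
    show "hasm (LEAST j. hasm j a b) a' b'" using hL unfolding lev_def .
    fix y assume "hasm y a' b'"
    then show "(LEAST j. hasm j a b) \<le> y" using nh unfolding lev_def by (meson not_le)
  qed
  have "\<lfloor>?N * b'\<rfloor> = m" using b'N by linarith
  then have e1: "\<lfloor>?N * b'\<rfloor> = \<lfloor>?N * b\<rfloor>" unfolding m_def .
  show "cc a' b' = cc a b" unfolding cc_def L e1 ..
qed

lemma diag_lemma:
  assumes "e > 0"
  shows "\<exists>d>0. d \<le> e/2 \<and> (\<forall>a b. x \<le> a \<longrightarrow> a < b \<longrightarrow> b < x + d \<longrightarrow> cc a b + sc a b < x + e)"
proof -
  obtain J where J: "2 / e < 2^J" using real_arch_pow[of 2 "2/e"] by auto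
  then have J': "1 / 2^J < e/2" using assms by (simp add: field_simps)
  define m where "m = \<lfloor>2^J * x\<rfloor>"
  have m: "m \<le> 2^J * x" "2^J * x < m + 1" unfolding m_def by linarith+
  define d where "d = min (e/2) ((m+1)/2^J - x)"
  have dpos: "d > 0" unfolding d_def using m assms by (simp add: field_simps)
  have H: "cc a b + sc a b < x + e" if ab: "x \<le> a" "a < b" "b < x + d" for a b
  proof -
    have nJ: "\<not> hasm J a b"
    proof
      assume "hasm J a b"
      then obtain k::int where k: "a < k / 2^J" "k / 2^J \<le> b" unfolding hasm_def by blast
      have "2^J * x \<le> 2^J * a" using ab by simp
      moreover have "2^J * a < k" using k by (simp add: field_simps)
      ultimately have "real_of_int m < real_of_int k" using m(1) by linarith
      then have "m < k" by simp
      moreover have "b < (m+1)/2^J" using ab unfolding d_def by simp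
      then have "k < m + 1" using k by (simp add: field_simps)
      ultimately show False by linarith
    qed
    have "J < lev a b"
    proof (rule ccontr)
      assume "\<not> J < lev a b"
      then have "hasm J a b" using hasm_mono[OF hasm_lev[OF ab(2)]] by simp
      then show False using nJ by simp
    qed
    then have "sc a b < 1/2^J" unfolding sc_def by (simp add: divide_strict_left_mono)
    then have "sc a b < e/2" using J' by linarith
    moreover have "cc a b \<le> b" using cc_props[OF ab(2)] by simp
    moreover have "d \<le> e/2" unfolding d_def by (rule min.cobounded1)
    ultimately show ?thesis using ab by linarith
  qed
  have dle: "d \<le> e/2" unfolding d_def by (rule min.cobounded1)
  show ?thesis
  proof (intro exI[of _ d] conjI allI impI)
    show "d > 0" by (rule dpos)
    show "d \<le> e/2" by (rule dle)
    fix a b assume "x \<le> a" "a < b" "b < x + d"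
    then show "cc a b + sc a b < x + e" by (rule H)
  qed
qed



definition hh :: "real \<times> real \<Rightarrow> real \<times> real" where
  "hh p = (let a = fst p; b = snd p in
     if a < b then (if b < cc a b + sc a b / 2 then (a, 2*b - cc a b) else (2*b - cc a b - sc a b, a))
     else p)"

definition gg :: "real \<times> real \<Rightarrow> real \<times> real" where
  "gg q = (let u = fst q; v = snd q in
     if u < v then (u, (v + cc u v) / 2)
     else if v < u then (v, (u + cc v u + sc v u) / 2) else q)"

definition TT :: "(real \<times> real) set" where "TT = {p. fst p \<le> snd p}"

lemma sc_eq: "lev a' b' = lev a b \<Longrightarrow> sc a' b' = sc a b"
  unfolding sc_def by simp

lemma hh_form:
  assumes "a < b"
  shows "\<exists>w. (hh (a,b) = (a,w) \<or> hh (a,b) = (w,a)) \<and> cc a b \<le> w \<and> w < cc a b + sc a b"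
  using cc_props[OF assms] assms unfolding hh_def Let_def by auto

lemma gg_form:
  assumes "a < b" "(u = a \<and> v = b) \<or> (u = b \<and> v = a)"
  shows "\<exists>w. gg (u,v) = (a,w) \<and> cc a b \<le> w \<and> w < cc a b + sc a b"
proof -
  note cp = cc_props[OF assms(1)]
  from assms(2) consider "u = a \<and> v = b" | "u = b \<and> v = a" by blast
  then show ?thesis
  proof cases
    case 1
    then have "gg (u,v) = (a, (b + cc a b)/2)" using assms(1) unfolding gg_def by simp
    then show ?thesis using cp by (intro exI[of _ "(b + cc a b)/2"]) simp
  next
    case 2
    then have "gg (u,v) = (a, (b + cc a b + sc a b)/2)" using assms(1) unfolding gg_def by simp
    then show ?thesis using cp sc_pos[of a b] by (intro exI[of _ "(b + cc a b + sc a b)/2"]) simp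
  qed
qed

lemma gg_hh: assumes "p \<in> TT" shows "gg (hh p) = p"
proof -
  obtain a b where p: "p = (a,b)" by fastforce
  show ?thesis
  proof (cases "a < b")
    case False
    then have "a = b" using assms p unfolding TT_def by auto
    then show ?thesis unfolding p hh_def gg_def by simp
  next
    case True
    note cp = cc_props[OF True]
    show ?thesis
    proof (cases "b < cc a b + sc a b / 2")
      case b1: True
      let ?v = "2*b - cc a b"
      have h: "hh p = (a, ?v)" unfolding p hh_def using True b1 by simp
      have vv: "cc a b \<le> ?v" "?v < cc a b + sc a b" using cp b1 by (auto simp: field_simps)
      have lc: "lev a ?v = lev a b" "cc a ?v = cc a b"
        using local_const[OF True order.refl cp(1) vv(1) vv(2)] by auto
      have "a < ?v" using cp by (auto simp: field_simps)
      then show ?thesis unfolding h gg_def using lc p by simp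
    next
      case b2: False
      let ?u = "2*b - cc a b - sc a b"
      have h: "hh p = (?u, a)" unfolding p hh_def using True b2 by simp
      have uu: "cc a b \<le> ?u" "?u < cc a b + sc a b" using cp b2 by (auto simp: field_simps)
      have lc: "lev a ?u = lev a b" "cc a ?u = cc a b"
        using local_const[OF True order.refl cp(1) uu(1) uu(2)] by auto
      have sc: "sc a ?u = sc a b" by (rule sc_eq[OF lc(1)])
      have "a < ?u" using cp b2 sc_pos[of a b] by (auto simp: field_simps)
      then show ?thesis unfolding h gg_def using lc sc p by simp
    qed
  qed
qed

lemma hh_gg: "hh (gg q) = q"
proof -
  obtain u v where q: "q = (u,v)" by fastforce
  consider "u < v" | "v < u" | "u = v" by linarith
  then show ?thesis
  proof cases
    case 1
    note cp = cc_props[OF 1]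
    let ?b = "(v + cc u v) / 2"
    have g: "gg (u,v) = (u, ?b)" unfolding gg_def using 1 by simp
    have bb: "cc u v \<le> ?b" "?b < cc u v + sc u v" using cp sc_pos[of u v] by (auto simp: field_simps)
    have lc: "lev u ?b = lev u v" "cc u ?b = cc u v"
      using local_const[OF 1 order.refl cp(1) bb(1) bb(2)] by auto
    have sc: "sc u ?b = sc u v" by (rule sc_eq[OF lc(1)])
    have "u < ?b" using cp by (auto simp: field_simps)
    moreover have "?b < cc u ?b + sc u ?b / 2" unfolding lc sc using cp by (auto simp: field_simps)
    moreover have "2 * ?b - cc u v = v" by (simp add: field_simps)
    ultimately show ?thesis unfolding q g hh_def using lc sc by simp
  next
    case 2
    note cp = cc_props[OF 2]
    let ?b = "(u + cc v u + sc v u) / 2"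
    have g: "gg (u,v) = (v, ?b)" unfolding gg_def using 2 by simp
    have bb: "cc v u \<le> ?b" "?b < cc v u + sc v u" using cp sc_pos[of v u] by (auto simp: field_simps)
    have lc: "lev v ?b = lev v u" "cc v ?b = cc v u"
      using local_const[OF 2 order.refl cp(1) bb(1) bb(2)] by auto
    have sc: "sc v ?b = sc v u" by (rule sc_eq[OF lc(1)])
    have "v < ?b" using cp sc_pos[of v u] by (auto simp: field_simps)
    moreover have "\<not> ?b < cc v ?b + sc v ?b / 2" unfolding lc sc using cp by (auto simp: field_simps)
    moreover have "2 * ?b - cc v u - sc v u = u" by (simp add: field_simps)
    ultimately show ?thesis unfolding q g hh_def using lc sc by simp
  next
    case 3
    then show ?thesis unfolding q gg_def hh_def by simp
  qed
qed

lemma gg_TT: "gg q \<in> TT"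
proof -
  obtain u v where q: "q = (u,v)" by fastforce
  consider "u < v" | "v < u" | "u = v" by linarith
  then show ?thesis
  proof cases
    case 1 then show ?thesis using cc_props[OF 1] unfolding q gg_def TT_def by simp
  next
    case 2 then show ?thesis using cc_props[OF 2] sc_pos[of v u] unfolding q gg_def TT_def by simp
  qed (simp add: q gg_def TT_def)
qed

lemma box_mem: "q \<in> sbox p d \<longleftrightarrow> fst p \<le> fst q \<and> fst q < fst p + d \<and> snd p \<le> snd q \<and> snd q < snd p + d"
  unfolding sbox_def by (auto simp: mem_Times_iff)

lemma hh_cont_pt:
  assumes p: "p \<in> TT" and e: "e > 0"
  shows "\<exists>d>0. \<forall>q\<in>TT. q \<in> sbox p d \<longrightarrow> hh q \<in> sbox (hh p) e"
proof -
  obtain a b where pab: "p = (a,b)" by fastforce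
  show ?thesis
  proof (cases "a < b")
    case False
    then have ab: "a = b" using p pab unfolding TT_def by auto
    obtain d where d: "d > 0" "d \<le> e/2" "\<And>a' b'. a \<le> a' \<Longrightarrow> a' < b' \<Longrightarrow> b' < a + d \<Longrightarrow> cc a' b' + sc a' b' < a + e"
      using diag_lemma[OF e, of a] by blast
    have hp: "hh p = (a,a)" unfolding pab ab hh_def by simp
    show ?thesis
    proof (intro exI[of _ d] conjI ballI impI)
      fix q assume q: "q \<in> TT" "q \<in> sbox p d"
      obtain a' b' where qab: "q = (a',b')" by fastforce
      have qq: "a \<le> a'" "a' < a + d" "a \<le> b'" "b' < a + d" "a' \<le> b'"
        using q unfolding qab pab ab box_mem TT_def by auto
      show "hh q \<in> sbox (hh p) e"
      proof (cases "a' < b'")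
        case True
        obtain w where w: "hh (a',b') = (a',w) \<or> hh (a',b') = (w,a')" "cc a' b' \<le> w" "w < cc a' b' + sc a' b'"
          using hh_form[OF True] by blast
        have "a < cc a' b'" using cc_props[OF True] qq by linarith
        moreover have "cc a' b' + sc a' b' < a + e" using d(3)[OF qq(1) True qq(4)] .
        ultimately show ?thesis using w qq d unfolding hp qab box_mem by auto
      next
        case False
        then have "hh q = q" unfolding qab hh_def by simp
        then show ?thesis using qq d unfolding hp qab box_mem by auto
      qed
    qed (use d in auto)
  next
    case True
    note cp = cc_props[OF True]
    let ?c = "cc a b" and ?s = "sc a b"
    show ?thesis
    proof (cases "b < ?c + ?s / 2")
      case b1: True
      define d where "d = min (?c - a) (min (?c + ?s/2 - b) (e/2))"
      have dpos: "d > 0" using cp b1 e unfolding d_def by simp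
      have hp: "hh p = (a, 2*b - ?c)" unfolding pab hh_def using True b1 by simp
      show ?thesis
      proof (intro exI[of _ d] conjI ballI impI dpos)
        fix q assume q: "q \<in> TT" "q \<in> sbox p d"
        obtain a' b' where qab: "q = (a',b')" by fastforce
        have qq: "a \<le> a'" "a' < a + d" "b \<le> b'" "b' < b + d"
          using q unfolding qab pab box_mem by auto
        have r: "a' < ?c" "?c \<le> b'" "b' < ?c + ?s/2" using qq cp unfolding d_def by auto
        have lc: "lev a' b' = lev a b" "cc a' b' = ?c"
          using local_const[OF True qq(1) r(1) r(2)] r(3) sc_pos[of a b] by auto
        have sc: "sc a' b' = ?s" by (rule sc_eq[OF lc(1)])
        have "a' < b'" using r(1) r(2) by linarith
        then have "hh q = (a', 2*b' - ?c)" unfolding qab hh_def using lc sc r by simp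
        then show "hh q \<in> sbox (hh p) e" unfolding hp box_mem using qq unfolding d_def by auto
      qed
    next
      case b2: False
      define d where "d = min (?c - a) (min (?c + ?s - b) (e/2))"
      have dpos: "d > 0" using cp e unfolding d_def by simp
      have hp: "hh p = (2*b - ?c - ?s, a)" unfolding pab hh_def using True b2 by simp
      show ?thesis
      proof (intro exI[of _ d] conjI ballI impI dpos)
        fix q assume q: "q \<in> TT" "q \<in> sbox p d"
        obtain a' b' where qab: "q = (a',b')" by fastforce
        have qq: "a \<le> a'" "a' < a + d" "b \<le> b'" "b' < b + d"
          using q unfolding qab pab box_mem by auto
        have r: "a' < ?c" "?c \<le> b'" "b' < ?c + ?s" "\<not> b' < ?c + ?s/2" using qq cp b2 unfolding d_def by auto
        have lc: "lev a' b' = lev a b" "cc a' b' = ?c"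
          using local_const[OF True qq(1) r(1) r(2) r(3)] by auto
        have sc: "sc a' b' = ?s" by (rule sc_eq[OF lc(1)])
        have "a' < b'" using r(1) r(2) by linarith
        then have "hh q = (2*b' - ?c - ?s, a')" unfolding qab hh_def using lc sc r by simp
        then show "hh q \<in> sbox (hh p) e" unfolding hp box_mem using qq unfolding d_def by auto
      qed
    qed
  qed
qed

lemma gg_cont_pt:
  assumes e: "e > 0"
  shows "\<exists>d>0. \<forall>q\<in>UNIV. q \<in> sbox p d \<longrightarrow> gg q \<in> sbox (gg p) e"
proof -
  obtain u v where puv: "p = (u,v)" by fastforce
  consider "u < v" | "v < u" | "u = v" by linarith
  then show ?thesis
  proof cases
    case 1
    note cp = cc_props[OF 1]
    let ?c = "cc u v" and ?s = "sc u v"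
    define d where "d = min (?c - u) (min (?c + ?s - v) e)"
    have dpos: "d > 0" using cp e unfolding d_def by simp
    have gp: "gg p = (u, (v + ?c)/2)" unfolding puv gg_def using 1 by simp
    show ?thesis
    proof (intro exI[of _ d] conjI ballI impI dpos)
      fix q assume q: "q \<in> sbox p d"
      obtain u' v' where qab: "q = (u',v')" by fastforce
      have qq: "u \<le> u'" "u' < u + d" "v \<le> v'" "v' < v + d"
        using q unfolding qab puv box_mem by auto
      have r: "u' < ?c" "?c \<le> v'" "v' < ?c + ?s" using qq cp unfolding d_def by auto
      have lc: "cc u' v' = ?c" using local_const[OF 1 qq(1) r] by auto
      have "u' < v'" using r by linarith
      then have "gg q = (u', (v' + ?c)/2)" unfolding qab gg_def using lc by simp
      moreover have "d \<le> e" unfolding d_def by simp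
      ultimately show "gg q \<in> sbox (gg p) e" unfolding gp box_mem using qq by (auto simp: field_simps)
    qed
  next
    case 2
    note cp = cc_props[OF 2]
    let ?c = "cc v u" and ?s = "sc v u"
    define d where "d = min (?c - v) (min (?c + ?s - u) e)"
    have dpos: "d > 0" using cp e unfolding d_def by simp
    have gp: "gg p = (v, (u + ?c + ?s)/2)" unfolding puv gg_def using 2 by simp
    show ?thesis
    proof (intro exI[of _ d] conjI ballI impI dpos)
      fix q assume q: "q \<in> sbox p d"
      obtain u' v' where qab: "q = (u',v')" by fastforce
      have qq: "u \<le> u'" "u' < u + d" "v \<le> v'" "v' < v + d"
        using q unfolding qab puv box_mem by auto
      have r: "v' < ?c" "?c \<le> u'" "u' < ?c + ?s" using qq cp unfolding d_def by auto
      have lc: "lev v' u' = lev v u" "cc v' u' = ?c" using local_const[OF 2 qq(3) r] by auto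
      have sc: "sc v' u' = ?s" by (rule sc_eq[OF lc(1)])
      have "v' < u'" using r by linarith
      then have "gg q = (v', (u' + ?c + ?s)/2)" unfolding qab gg_def using lc sc by simp
      moreover have "d \<le> e" unfolding d_def by simp
      ultimately show "gg q \<in> sbox (gg p) e" unfolding gp box_mem using qq by (auto simp: field_simps)
    qed
  next
    case 3
    obtain d where d: "d > 0" "d \<le> e/2" "\<And>a' b'. u \<le> a' \<Longrightarrow> a' < b' \<Longrightarrow> b' < u + d \<Longrightarrow> cc a' b' + sc a' b' < u + e"
      using diag_lemma[OF e, of u] by blast
    have gp: "gg p = (u,u)" unfolding puv 3 gg_def by simp
    show ?thesis
    proof (intro exI[of _ d] conjI ballI impI)
      fix q assume q: "q \<in> sbox p d"
      obtain u' v' where qab: "q = (u',v')" by fastforce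
      have qq: "u \<le> u'" "u' < u + d" "u \<le> v'" "v' < u + d"
        using q unfolding qab puv 3 box_mem by auto
      consider "u' < v'" | "v' < u'" | "u' = v'" by linarith
      then show "gg q \<in> sbox (gg p) e"
      proof cases
        case 1
        obtain w where w: "gg (u',v') = (u',w)" "cc u' v' \<le> w" "w < cc u' v' + sc u' v'"
          using gg_form[OF 1] by blast
        have "u < cc u' v'" using cc_props[OF 1] qq by linarith
        moreover have "cc u' v' + sc u' v' < u + e" using d(3)[OF qq(1) 1 qq(4)] .
        ultimately show ?thesis using w qq d unfolding gp qab box_mem by auto
      next
        case 2
        obtain w where w: "gg (u',v') = (v',w)" "cc v' u' \<le> w" "w < cc v' u' + sc v' u'"
          using gg_form[OF 2] by blast
        have "u < cc v' u'" using cc_props[OF 2] qq by linarith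
        moreover have "cc v' u' + sc v' u' < u + e" using d(3)[OF qq(3) 2 qq(2)] .
        ultimately show ?thesis using w qq d unfolding gp qab box_mem by auto
      next
        case 3
        then have "gg q = q" unfolding qab gg_def by simp
        then show ?thesis using qq d unfolding gp qab box_mem by auto
      qed
    qed (use d in auto)
  qed
qed

lemma TT_homeo: "subtopology S2 TT homeomorphic_space S2"
proof -
  have c1: "continuous_map (subtopology S2 TT) (subtopology S2 UNIV) hh"
  proof (rule cont_sub)
    show "hh ` TT \<subseteq> UNIV" by simp
    fix p and e :: real assume "p \<in> TT" "e > 0"
    then show "\<exists>d>0. \<forall>q\<in>TT. q \<in> sbox p d \<longrightarrow> hh q \<in> sbox (hh p) e" by (rule hh_cont_pt)
  qed
  have c2: "continuous_map (subtopology S2 UNIV) (subtopology S2 TT) gg"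
  proof (rule cont_sub)
    show "gg ` UNIV \<subseteq> TT" using gg_TT by blast
    fix p :: "real \<times> real" and e :: real assume "p \<in> UNIV" "e > 0"
    then show "\<exists>d>0. \<forall>q\<in>UNIV. q \<in> sbox p d \<longrightarrow> gg q \<in> sbox (gg p) e" using gg_cont_pt by blast
  qed
  have "homeomorphic_maps (subtopology S2 TT) (subtopology S2 UNIV) hh gg"
    unfolding homeomorphic_maps_def using c1 c2 gg_hh hh_gg by auto
  then show ?thesis using homeomorphic_maps_imp_homeomorphic_space by force
qed



lemma closed_single: "closedin sorgenfrey {a}"
proof -
  have "openin sorgenfrey (UNIV - {a})"
    unfolding open_sorg
  proof
    fix x assume "x \<in> UNIV - {a}"
    then have "x \<noteq> a" by simp
    show "\<exists>e>0. {x..<x + e} \<subseteq> UNIV - {a}"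
    proof (cases "x < a")
      case True then show ?thesis by (intro exI[of _ "a - x"]) auto
    next
      case False then show ?thesis using \<open>x \<noteq> a\<close> by (intro exI[of _ 1]) auto
    qed
  qed
  then show ?thesis by (simp add: closedin_def)
qed

lemma closed_pair: "closedin sorgenfrey {a,b}"
proof -
  have "{a,b} = {a} \<union> {b}" by auto
  then show ?thesis using closed_single closedin_Un by metis
qed

lemma pair_MinMax:
  fixes A :: "real set"
  assumes "finite A" "A \<noteq> {}" "card A \<le> 2"
  shows "A = {Min A, Max A}"
proof
  show "{Min A, Max A} \<subseteq> A" using assms by simp
  show "A \<subseteq> {Min A, Max A}"
  proof
    fix z assume z: "z \<in> A"
    show "z \<in> {Min A, Max A}"
    proof (rule ccontr)
      assume nz: "z \<notin> {Min A, Max A}"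
      have "Min A \<le> z" "z \<le> Max A" using z assms by auto
      then have "Min A < z" "z < Max A" using nz by auto
      then have "card {Min A, z, Max A} = 3" by auto
      moreover have "{Min A, z, Max A} \<subseteq> A" using z assms by simp
      then have "card {Min A, z, Max A} \<le> card A" using assms(1) by (rule card_mono[rotated])
      ultimately show False using assms(3) by simp
    qed
  qed
qed

lemma card_pair_le: "card {a, b} \<le> 2"
  by (cases "a = b") auto

definition CF :: "real set set" where
  "CF = {A. A \<subseteq> topspace sorgenfrey \<and> A \<noteq> {} \<and> finite A \<and> card A \<le> 2}"

abbreviation VS where "VS \<equiv> {{A. closedin sorgenfrey A \<and> A \<subseteq> U} | U. openin sorgenfrey U} \<union>
      {{A. closedin sorgenfrey A \<and> A \<inter> U \<noteq> {}} | U. openin sorgenfrey U}"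

lemma open_UNIV_sorg: "openin sorgenfrey (UNIV::real set)"
  using openin_topspace[of sorgenfrey] by simp

lemma VS_UNIV: "{A. closedin sorgenfrey A \<and> A \<subseteq> UNIV} \<in> VS"
  apply (rule UnI1)
  apply (rule CollectI)
  apply (rule exI[of _ UNIV])
  using open_UNIV_sorg by simp

lemma topspace_vietoris: "topspace (vietoris sorgenfrey) = {A. closedin sorgenfrey A}"
proof -
  have eq: "topspace (vietoris sorgenfrey) = \<Union> VS" unfolding vietoris_def
    by (rule topology_generated_by_topspace)
  have s1: "\<Union> VS \<subseteq> {A. closedin sorgenfrey A}"
  proof
    fix A assume "A \<in> \<Union> VS"
    then obtain W where W: "W \<in> VS" "A \<in> W" by (rule UnionE)
    from W(1) show "A \<in> {A. closedin sorgenfrey A}"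
    proof
      assume "W \<in> {{A. closedin sorgenfrey A \<and> A \<subseteq> U} | U. openin sorgenfrey U}"
      then obtain U where "W = {A. closedin sorgenfrey A \<and> A \<subseteq> U}" by blast
      then show ?thesis using W(2) by simp
    next
      assume "W \<in> {{A. closedin sorgenfrey A \<and> A \<inter> U \<noteq> {}} | U. openin sorgenfrey U}"
      then obtain U where "W = {A. closedin sorgenfrey A \<and> A \<inter> U \<noteq> {}}" by blast
      then show ?thesis using W(2) by simp
    qed
  qed
  have s2: "{A. closedin sorgenfrey A} \<subseteq> \<Union> VS"
  proof
    fix A assume "A \<in> {A. closedin sorgenfrey A}"
    then have "A \<in> {A. closedin sorgenfrey A \<and> A \<subseteq> UNIV}" by simp
    then show "A \<in> \<Union> VS" using VS_UNIV by (rule UnionI[rotated])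
  qed
  show ?thesis using eq s1 s2 by (rule trans[OF _ equalityI])
qed

lemma topspace_F2: "topspace (F2 sorgenfrey) = {{a,b} | a b. a \<le> b}"
proof -
  have e1: "topspace (F2 sorgenfrey) = {A. closedin sorgenfrey A} \<inter> CF"
    unfolding F2_def CF_def topspace_subtopology topspace_vietoris by simp
  have s1: "{A. closedin sorgenfrey A} \<inter> CF \<subseteq> {{a,b} | a b. a \<le> b}"
  proof
    fix A assume "A \<in> {A. closedin sorgenfrey A} \<inter> CF"
    then have A: "finite A" "A \<noteq> {}" "card A \<le> 2" unfolding CF_def by auto
    then have "A = {Min A, Max A}" "Min A \<le> Max A" using pair_MinMax[OF A] by auto
    then show "A \<in> {{a,b} | a b. a \<le> b}" by (intro CollectI exI conjI)
  qed
  have s2: "{{a,b} | a b. a \<le> b} \<subseteq> {A. closedin sorgenfrey A} \<inter> CF"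
  proof
    fix A assume "A \<in> {{a,b} | a b. (a::real) \<le> b}"
    then obtain a b where "A = {a,b}" by blast
    then show "A \<in> {A. closedin sorgenfrey A} \<inter> CF"
      unfolding CF_def using closed_pair[of a b] card_pair_le[of a b] by simp
  qed
  show ?thesis using e1 s1 s2 by (rule trans[OF _ equalityI])
qed

definition phi :: "real set \<Rightarrow> real \<times> real" where "phi A = (Min A, Max A)"
definition psi :: "real \<times> real \<Rightarrow> real set" where "psi p = {fst p, snd p}"

lemma MinMax_pair: "a \<le> b \<Longrightarrow> Min {a,b} = a \<and> Max {a,b} = b"
  by (auto simp: min_def max_def)

lemma psi_cont: "continuous_map (subtopology S2 TT) (F2 sorgenfrey) psi"
proof -
  have "continuous_map (subtopology S2 TT) (vietoris sorgenfrey) psi"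
    unfolding vietoris_def
  proof (rule continuous_on_generated_topo)
    fix W assume "W \<in> VS"
    then consider U where "openin sorgenfrey U" "W = {A. closedin sorgenfrey A \<and> A \<subseteq> U}"
      | U where "openin sorgenfrey U" "W = {A. closedin sorgenfrey A \<and> A \<inter> U \<noteq> {}}" by blast
    then show "openin (subtopology S2 TT) (psi -` W \<inter> topspace (subtopology S2 TT))"
    proof cases
      case 1
      have "psi -` W \<inter> topspace (subtopology S2 TT) = (U \<times> U) \<inter> TT"
        using 1 closed_pair unfolding psi_def by auto
      moreover have "openin S2 (U \<times> U)" using 1 by (simp add: openin_prod_Times_iff)
      ultimately show ?thesis unfolding openin_subtopology by blast
    next
      case 2
      have "psi -` W \<inter> topspace (subtopology S2 TT) = ((U \<times> UNIV) \<union> (UNIV \<times> U)) \<inter> TT"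
        using 2 closed_pair unfolding psi_def by auto
      moreover have "openin S2 ((U \<times> UNIV) \<union> (UNIV \<times> U))" using 2
        by (intro openin_Un) (simp_all add: openin_prod_Times_iff open_UNIV_sorg)
      ultimately show ?thesis unfolding openin_subtopology by blast
    qed
  next
    show "psi ` topspace (subtopology S2 TT) \<subseteq> \<Union> VS"
    proof
      fix A assume "A \<in> psi ` topspace (subtopology S2 TT)"
      then obtain p where "A = {fst p, snd p}" unfolding psi_def by blast
      then have "A \<in> {A. closedin sorgenfrey A \<and> A \<subseteq> UNIV}" using closed_pair by simp
      then show "A \<in> \<Union> VS" using VS_UNIV by (rule UnionI[rotated])
    qed
  qed
  moreover have "psi \<in> topspace (subtopology S2 TT) \<rightarrow> {A. A \<subseteq> topspace sorgenfrey \<and> A \<noteq> {} \<and> finite A \<and> card A \<le> 2}"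
    unfolding psi_def using card_pair_le by auto
  ultimately show ?thesis unfolding F2_def by (simp add: continuous_map_in_subtopology)
qed

lemma phi_cont: "continuous_map (F2 sorgenfrey) (subtopology S2 TT) phi"
proof (rule cont_into_sub)
  show "phi \<in> topspace (F2 sorgenfrey) \<rightarrow> TT"
    unfolding topspace_F2 phi_def TT_def using MinMax_pair by auto
  fix A and e :: real assume A: "A \<in> topspace (F2 sorgenfrey)" and e: "e > 0"
  then obtain a b where ab: "A = {a,b}" "a \<le> b" unfolding topspace_F2 by blast
  define I1 where "I1 = {a..<a+e}"
  define I2 where "I2 = {b..<b+e}"
  define W where "W = {B. closedin sorgenfrey B \<and> B \<subseteq> I1 \<union> I2} \<inter>
     {B. closedin sorgenfrey B \<and> B \<inter> I1 \<noteq> {}} \<inter> {B. closedin sorgenfrey B \<and> B \<inter> I2 \<noteq> {}}"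
  have o1: "openin sorgenfrey I1" "openin sorgenfrey I2" "openin sorgenfrey (I1 \<union> I2)"
    unfolding I1_def I2_def by (auto intro: open_sorg_Ico)
  have m1: "{B. closedin sorgenfrey B \<and> B \<subseteq> I1 \<union> I2} \<in> VS"
    apply (rule UnI1) apply (rule CollectI) apply (rule exI[of _ "I1 \<union> I2"]) using o1 by simp
  have m2: "{B. closedin sorgenfrey B \<and> B \<inter> I1 \<noteq> {}} \<in> VS"
    apply (rule UnI2) apply (rule CollectI) apply (rule exI[of _ "I1"]) using o1 by simp
  have m3: "{B. closedin sorgenfrey B \<and> B \<inter> I2 \<noteq> {}} \<in> VS"
    apply (rule UnI2) apply (rule CollectI) apply (rule exI[of _ "I2"]) using o1 by simp
  have "openin (vietoris sorgenfrey) W" unfolding W_def vietoris_def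
    by (intro openin_Int topology_generated_by_Basis m1 m2 m3)
  then have oW: "openin (F2 sorgenfrey) (W \<inter> {A. A \<subseteq> topspace sorgenfrey \<and> A \<noteq> {} \<and> finite A \<and> card A \<le> 2})"
    unfolding F2_def openin_subtopology by (intro exI[of _ W]) simp
  have AW: "A \<in> W" unfolding W_def ab I1_def I2_def using closed_pair ab e by auto
  show "\<exists>U. openin (F2 sorgenfrey) U \<and> A \<in> U \<and> (\<forall>y\<in>U. phi y \<in> sbox (phi A) e)"
  proof (intro exI conjI ballI)
    show "openin (F2 sorgenfrey) (W \<inter> {A. A \<subseteq> topspace sorgenfrey \<and> A \<noteq> {} \<and> finite A \<and> card A \<le> 2})" by (rule oW)
    show "A \<in> W \<inter> {A. A \<subseteq> topspace sorgenfrey \<and> A \<noteq> {} \<and> finite A \<and> card A \<le> 2}"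
      using AW ab card_pair_le by auto
    fix B assume B: "B \<in> W \<inter> {A. A \<subseteq> topspace sorgenfrey \<and> A \<noteq> {} \<and> finite A \<and> card A \<le> 2}"
    then have "B \<in> topspace (F2 sorgenfrey)" using oW openin_subset by blast
    then obtain a' b' where ab': "B = {a',b'}" "a' \<le> b'" unfolding topspace_F2 by blast
    have pB: "phi B = (a', b')" unfolding phi_def ab'(1) using MinMax_pair[OF ab'(2)] by simp
    have pA: "phi A = (a, b)" unfolding phi_def ab(1) using MinMax_pair[OF ab(2)] by simp
    have c1: "a' \<in> I1 \<union> I2" "b' \<in> I1 \<union> I2" and c2: "a' \<in> I1 \<or> b' \<in> I1" and c3: "a' \<in> I2 \<or> b' \<in> I2"
      using B unfolding W_def ab'(1) by auto
    show "phi B \<in> sbox (phi A) e" unfolding pB pA box_mem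
      using c1 c2 c3 ab(2) ab'(2) unfolding I1_def I2_def by auto
  qed
qed

lemma F2_homeo_TT: "F2 sorgenfrey homeomorphic_space subtopology S2 TT"
proof -
  have "homeomorphic_maps (F2 sorgenfrey) (subtopology S2 TT) phi psi"
    unfolding homeomorphic_maps_def
  proof (intro conjI ballI phi_cont psi_cont)
    fix A assume "A \<in> topspace (F2 sorgenfrey)"
    then obtain a b where ab: "A = {a,b}" "a \<le> b" unfolding topspace_F2 by blast
    then show "psi (phi A) = A" unfolding phi_def psi_def using MinMax_pair[OF ab(2)] by simp
  next
    fix p assume "p \<in> topspace (subtopology S2 TT)"
    then have "fst p \<le> snd p" unfolding TT_def by simp
    then show "phi (psi p) = p" unfolding phi_def psi_def using MinMax_pair by (cases p) simp
  qed
  then show ?thesis by (rule homeomorphic_maps_imp_homeomorphic_space)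
qed

lemma transl_cont: "continuous_map S2 S2 (\<lambda>p. (fst p + c1, snd p + c2))"
proof -
  have "continuous_map (subtopology S2 UNIV) (subtopology S2 UNIV) (\<lambda>p. (fst p + c1, snd p + c2))"
  proof (rule cont_sub)
    show "(\<lambda>p. (fst p + c1, snd p + c2)) ` UNIV \<subseteq> UNIV" by simp
    fix p :: "real \<times> real" and e :: real assume "p \<in> UNIV" "e > 0"
    show "\<exists>d>0. \<forall>q\<in>UNIV. q \<in> sbox p d \<longrightarrow> (fst q + c1, snd q + c2) \<in> sbox (fst p + c1, snd p + c2) e"
    proof (intro exI[of _ e] conjI ballI impI)
      show "e > 0" by fact
      fix q assume "q \<in> sbox p e"
      then show "(fst q + c1, snd q + c2) \<in> sbox (fst p + c1, snd p + c2) e" unfolding box_mem by simp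
    qed
  qed
  then show ?thesis by simp
qed

lemma S2_homogeneous: "homogeneous_space S2"
  unfolding homogeneous_space_def
proof (intro ballI)
  fix x y :: "real \<times> real"
  let ?t = "\<lambda>p::real\<times>real. (fst p + (fst y - fst x), snd p + (snd y - snd x))"
  let ?t' = "\<lambda>p::real\<times>real. (fst p + (fst x - fst y), snd p + (snd x - snd y))"
  have "homeomorphic_maps S2 S2 ?t ?t'"
    unfolding homeomorphic_maps_def using transl_cont by simp
  then have "homeomorphic_map S2 S2 ?t" by (rule homeomorphic_maps_imp_map)
  moreover have "?t x = y" by simp
  ultimately show "\<exists>h. homeomorphic_map S2 S2 h \<and> h x = y" by blast
qed

lemma homogeneous_transfer:
  assumes "X homeomorphic_space Y" "homogeneous_space Y"
  shows "homogeneous_space X"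
  unfolding homogeneous_space_def
proof (intro ballI)
  fix x y assume x: "x \<in> topspace X" and y: "y \<in> topspace X"
  obtain f g where fg: "homeomorphic_maps X Y f g" using assms(1) unfolding homeomorphic_space_def by blast
  have f: "homeomorphic_map X Y f" and g: "homeomorphic_map Y X g"
    using fg homeomorphic_maps_map by blast+
  have fx: "f x \<in> topspace Y" "f y \<in> topspace Y"
    using x y fg unfolding homeomorphic_maps_def continuous_map_def by auto
  obtain k where k: "homeomorphic_map Y Y k" "k (f x) = f y"
    using assms(2) fx unfolding homogeneous_space_def by blast
  have "homeomorphic_map X X (g \<circ> k \<circ> f)"
    using f g k by (intro homeomorphic_map_compose) auto
  moreover have "(g \<circ> k \<circ> f) x = y" using k fg y unfolding homeomorphic_maps_def by simp
  ultimately show "\<exists>h. homeomorphic_map X X h \<and> h x = y" by blast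
qed

theorem theorem1p2:
  shows "F2 sorgenfrey homeomorphic_space prod_topology sorgenfrey sorgenfrey
         \<and> homogeneous_space (F2 sorgenfrey)"
proof -
  have "F2 sorgenfrey homeomorphic_space prod_topology sorgenfrey sorgenfrey"
    using F2_homeo_TT TT_homeo homeomorphic_space_trans by blast
  then show ?thesis using homogeneous_transfer S2_homogeneous by blast
qed

end
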